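(* Let $\mathcal{V}$ be a locally small symmetric monoidal closed category. Then $\mathrm{StrMono}_{\mathcal{V}}\underline{\mathcal{V}}=\mathrm{StrMono}\,\mathcal{V}$.
   Context: $\underline{\mathcal{V}}$ is the self-enrichment of $\mathcal{V}$. For a $\mathcal{V}$-category $\mathbf{A}$: $\mathcal{V}$-monos are morphisms $m$ with every $\mathbf{A}(A,m)$ mono in $\mathcal{V}$, $\mathcal{V}$-epis are $\mathcal{V}$-monos in $\mathbf{A}^{\mathrm{op}}$; $e\downarrow_{\mathcal{V}}m$ for $e:A_1\to A_2$, $m:B_1\to B_2$ means the square formed by $\mathbf{A}(A_2,m)$, $\mathbf{A}(e,B_1)$, $\mathbf{A}(e,B_2)$, $\mathbf{A}(A_1,m)$ is a pullback in $\mathcal{V}$; $\mathcal{E}^{\downarrow_{\mathcal{V}}}$ is the class of $m$ with $e\downarrow_{\mathcal{V}}m$ for all $e\in\mathcal{E}$. $\mathrm{StrMono}_{\mathcal{V}}\mathbf{A}:=(\mathrm{Epi}_{\mathcal{V}}\mathbf{A})^{\downarrow_{\mathcal{V}}}\cap\mathrm{Mono}_{\mathcal{V}}\mathbf{A}$. The ordinary class $\mathrm{StrMono}\,\mathcal{V}=(\mathrm{Epi}\,\mathcal{V})^{\downarrow}\cap\mathrm{Mono}\,\mathcal{V}$ consists of the strong monomorphisms of $\mathcal{V}$ (monos with the unique diagonal fill-in property against all epis). *)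

theory Defs
  imports Main
begin

text \<open>A (locally small) category is represented with a type of objects and a
type of morphisms; every element of these types is an object/morphism.
Composition is total on the type but only meaningful on composable pairs.\<close>

record ('o, 'm) smc_data =
  sdom   :: "'m \<Rightarrow> 'o"
  scod   :: "'m \<Rightarrow> 'o"
  scomp  :: "'m \<Rightarrow> 'm \<Rightarrow> 'm"          \<comment> \<open>scomp g f = g o f\<close>
  sid    :: "'o \<Rightarrow> 'm"
  tobj   :: "'o \<Rightarrow> 'o \<Rightarrow> 'o"
  tarr   :: "'m \<Rightarrow> 'm \<Rightarrow> 'm"
  tunit  :: "'o"
  assoc  :: "'o \<Rightarrow> 'o \<Rightarrow> 'o \<Rightarrow> 'm"
  lunit  :: "'o \<Rightarrow> 'm"
  runit  :: "'o \<Rightarrow> 'm"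
  symm   :: "'o \<Rightarrow> 'o \<Rightarrow> 'm"
  ihom   :: "'o \<Rightarrow> 'o \<Rightarrow> 'o"
  ev     :: "'o \<Rightarrow> 'o \<Rightarrow> 'm"

definition hom_in :: "('o,'m,'x) smc_data_scheme \<Rightarrow> 'm \<Rightarrow> 'o \<Rightarrow> 'o \<Rightarrow> bool" where
  "hom_in V f A B \<longleftrightarrow> sdom V f = A \<and> scod V f = B"

definition is_category :: "('o,'m,'x) smc_data_scheme \<Rightarrow> bool" where
  "is_category V \<longleftrightarrow>
     (\<forall>A. hom_in V (sid V A) A A) \<and>
     (\<forall>f g. scod V f = sdom V g \<longrightarrow> hom_in V (scomp V g f) (sdom V f) (scod V g)) \<and>
     (\<forall>f. scomp V (sid V (scod V f)) f = f \<and> scomp V f (sid V (sdom V f)) = f) \<and>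
     (\<forall>f g h. scod V f = sdom V g \<and> scod V g = sdom V h \<longrightarrow>
         scomp V h (scomp V g f) = scomp V (scomp V h g) f)"

definition is_iso :: "('o,'m,'x) smc_data_scheme \<Rightarrow> 'm \<Rightarrow> bool" where
  "is_iso V f \<longleftrightarrow> (\<exists>g. hom_in V g (scod V f) (sdom V f) \<and>
       scomp V g f = sid V (sdom V f) \<and> scomp V f g = sid V (scod V f))"

definition is_monoidal :: "('o,'m,'x) smc_data_scheme \<Rightarrow> bool" where
  "is_monoidal V \<longleftrightarrow>
     \<comment> \<open>tensor is a bifunctor\<close>
     (\<forall>f g. hom_in V (tarr V f g) (tobj V (sdom V f) (sdom V g)) (tobj V (scod V f) (scod V g))) \<and>
     (\<forall>A B. tarr V (sid V A) (sid V B) = sid V (tobj V A B)) \<and>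
     (\<forall>f g f' g'. scod V f = sdom V g \<and> scod V f' = sdom V g' \<longrightarrow>
        tarr V (scomp V g f) (scomp V g' f') = scomp V (tarr V g g') (tarr V f f')) \<and>
     \<comment> \<open>associator: typed, invertible, natural\<close>
     (\<forall>A B C. hom_in V (assoc V A B C) (tobj V (tobj V A B) C) (tobj V A (tobj V B C))
              \<and> is_iso V (assoc V A B C)) \<and>
     (\<forall>f g h. scomp V (assoc V (scod V f) (scod V g) (scod V h)) (tarr V (tarr V f g) h)
            = scomp V (tarr V f (tarr V g h)) (assoc V (sdom V f) (sdom V g) (sdom V h))) \<and>
     \<comment> \<open>unitors: typed, invertible, natural\<close>
     (\<forall>A. hom_in V (lunit V A) (tobj V (tunit V) A) A \<and> is_iso V (lunit V A)) \<and>
     (\<forall>A. hom_in V (runit V A) (tobj V A (tunit V)) A \<and> is_iso V (runit V A)) \<and>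
     (\<forall>f. scomp V (lunit V (scod V f)) (tarr V (sid V (tunit V)) f) = scomp V f (lunit V (sdom V f))) \<and>
     (\<forall>f. scomp V (runit V (scod V f)) (tarr V f (sid V (tunit V))) = scomp V f (runit V (sdom V f))) \<and>
     \<comment> \<open>pentagon\<close>
     (\<forall>A B C D.
        scomp V (assoc V A B (tobj V C D)) (assoc V (tobj V A B) C D)
      = scomp V (tarr V (sid V A) (assoc V B C D))
          (scomp V (assoc V A (tobj V B C) D) (tarr V (assoc V A B C) (sid V D)))) \<and>
     \<comment> \<open>triangle\<close>
     (\<forall>A B. scomp V (tarr V (sid V A) (lunit V B)) (assoc V A (tunit V) B)
            = tarr V (runit V A) (sid V B))"

definition is_symmetric :: "('o,'m,'x) smc_data_scheme \<Rightarrow> bool" where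
  "is_symmetric V \<longleftrightarrow>
     (\<forall>A B. hom_in V (symm V A B) (tobj V A B) (tobj V B A)) \<and>
     (\<forall>f g. scomp V (symm V (scod V f) (scod V g)) (tarr V f g)
          = scomp V (tarr V g f) (symm V (sdom V f) (sdom V g))) \<and>
     (\<forall>A B. scomp V (symm V B A) (symm V A B) = sid V (tobj V A B)) \<and>
     \<comment> \<open>hexagon\<close>
     (\<forall>A B C.
        scomp V (assoc V B C A) (scomp V (symm V A (tobj V B C)) (assoc V A B C))
      = scomp V (tarr V (sid V B) (symm V A C))
          (scomp V (assoc V B A C) (tarr V (symm V A B) (sid V C))))"

text \<open>Closedness: each functor \<open>- \<otimes> B\<close> has right adjoint \<open>[B,-]\<close> with counit \<open>ev\<close>.\<close>
definition is_closed :: "('o,'m,'x) smc_data_scheme \<Rightarrow> bool" where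
  "is_closed V \<longleftrightarrow>
     (\<forall>B C. hom_in V (ev V B C) (tobj V (ihom V B C) B) C) \<and>
     (\<forall>A B C f. hom_in V f (tobj V A B) C \<longrightarrow>
        (\<exists>!g. hom_in V g A (ihom V B C) \<and> scomp V (ev V B C) (tarr V g (sid V B)) = f))"

definition symmetric_monoidal_closed :: "('o,'m,'x) smc_data_scheme \<Rightarrow> bool" where
  "symmetric_monoidal_closed V \<longleftrightarrow>
     is_category V \<and> is_monoidal V \<and> is_symmetric V \<and> is_closed V"

text \<open>Currying (transpose under the adjunction) and the internal-hom bifunctor
on morphisms: for \<open>h : A' \<rightarrow> A\<close>, \<open>k : B \<rightarrow> B'\<close>, \<open>[h,k] : [A,B] \<rightarrow> [A',B']\<close>.
This is the action \<open>\<underline>V\<close>(h,k) of the self-enrichment.\<close>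
definition curry_arr :: "('o,'m,'x) smc_data_scheme \<Rightarrow> 'o \<Rightarrow> 'o \<Rightarrow> 'o \<Rightarrow> 'm \<Rightarrow> 'm" where
  "curry_arr V A B C f =
     (THE g. hom_in V g A (ihom V B C) \<and> scomp V (ev V B C) (tarr V g (sid V B)) = f)"

definition ihom_arr :: "('o,'m,'x) smc_data_scheme \<Rightarrow> 'm \<Rightarrow> 'm \<Rightarrow> 'm" where
  "ihom_arr V h k =
     curry_arr V (ihom V (scod V h) (sdom V k)) (sdom V h) (scod V k)
       (scomp V k (scomp V (ev V (scod V h) (sdom V k))
                            (tarr V (sid V (ihom V (scod V h) (sdom V k))) h)))"

definition is_mono :: "('o,'m,'x) smc_data_scheme \<Rightarrow> 'm \<Rightarrow> bool" where
  "is_mono V m \<longleftrightarrow> (\<forall>g h. scod V g = sdom V m \<and> scod V h = sdom V m \<and> sdom V g = sdom V h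
       \<and> scomp V m g = scomp V m h \<longrightarrow> g = h)"

definition is_epi :: "('o,'m,'x) smc_data_scheme \<Rightarrow> 'm \<Rightarrow> bool" where
  "is_epi V e \<longleftrightarrow> (\<forall>g h. sdom V g = scod V e \<and> sdom V h = scod V e \<and> scod V g = scod V h
       \<and> scomp V g e = scomp V h e \<longrightarrow> g = h)"

definition orth :: "('o,'m,'x) smc_data_scheme \<Rightarrow> 'm \<Rightarrow> 'm \<Rightarrow> bool" where
  "orth V e m \<longleftrightarrow> (\<forall>u v. hom_in V u (sdom V e) (sdom V m) \<and> hom_in V v (scod V e) (scod V m)
        \<and> scomp V m u = scomp V v e \<longrightarrow>
        (\<exists>!d. hom_in V d (scod V e) (sdom V m) \<and> scomp V d e = u \<and> scomp V m d = v))"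

definition StrMono :: "('o,'m,'x) smc_data_scheme \<Rightarrow> 'm set" where
  "StrMono V = {m. is_mono V m \<and> (\<forall>e. is_epi V e \<longrightarrow> orth V e m)}"

definition is_pullback :: "('o,'m,'x) smc_data_scheme \<Rightarrow> 'm \<Rightarrow> 'm \<Rightarrow> 'm \<Rightarrow> 'm \<Rightarrow> bool" where
  "is_pullback V p1 p2 f g \<longleftrightarrow>
     sdom V p1 = sdom V p2 \<and> scod V p1 = sdom V f \<and> scod V p2 = sdom V g \<and> scod V f = scod V g \<and>
     scomp V f p1 = scomp V g p2 \<and>
     (\<forall>q1 q2. sdom V q1 = sdom V q2 \<and> scod V q1 = sdom V f \<and> scod V q2 = sdom V g \<and>
        scomp V f q1 = scomp V g q2 \<longrightarrow>
        (\<exists>!u. hom_in V u (sdom V q1) (sdom V p1) \<and> scomp V p1 u = q1 \<and> scomp V p2 u = q2))"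

definition V_mono :: "('o,'m,'x) smc_data_scheme \<Rightarrow> 'm \<Rightarrow> bool" where
  "V_mono V m \<longleftrightarrow> (\<forall>A. is_mono V (ihom_arr V (sid V A) m))"

text \<open>\<open>\<V>\<close>-epis of \<open>\<underline>V\<close> are \<open>\<V>\<close>-monos of the opposite: all \<open>[e,B]\<close> are mono.\<close>
definition V_epi :: "('o,'m,'x) smc_data_scheme \<Rightarrow> 'm \<Rightarrow> bool" where
  "V_epi V e \<longleftrightarrow> (\<forall>B. is_mono V (ihom_arr V e (sid V B)))"

definition V_orth :: "('o,'m,'x) smc_data_scheme \<Rightarrow> 'm \<Rightarrow> 'm \<Rightarrow> bool" where
  "V_orth V e m \<longleftrightarrow>
     is_pullback V (ihom_arr V (sid V (scod V e)) m) (ihom_arr V e (sid V (sdom V m)))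
                   (ihom_arr V e (sid V (scod V m))) (ihom_arr V (sid V (sdom V e)) m)"

definition StrMono_V :: "('o,'m,'x) smc_data_scheme \<Rightarrow> 'm set" where
  "StrMono_V V = {m. V_mono V m \<and> (\<forall>e. V_epi V e \<longrightarrow> V_orth V e m)}"

end

theory Submission
  imports Defs
begin

locale smc =
  fixes V :: "('o,'m) smc_data"
  assumes SMC: "symmetric_monoidal_closed V"
begin

lemma cat: "is_category V" using SMC unfolding symmetric_monoidal_closed_def by simp
lemma mon: "is_monoidal V" using SMC unfolding symmetric_monoidal_closed_def by simp
lemma sym: "is_symmetric V" using SMC unfolding symmetric_monoidal_closed_def by simp
lemma clo: "is_closed V" using SMC unfolding symmetric_monoidal_closed_def by simp

lemma dom_id[simp]: "sdom V (sid V A) = A" using cat unfolding is_category_def hom_in_def by simp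
lemma cod_id[simp]: "scod V (sid V A) = A" using cat unfolding is_category_def hom_in_def by simp
lemma dom_comp[simp]: "scod V f = sdom V g \<Longrightarrow> sdom V (scomp V g f) = sdom V f"
  using cat unfolding is_category_def hom_in_def by simp
lemma cod_comp[simp]: "scod V f = sdom V g \<Longrightarrow> scod V (scomp V g f) = scod V g"
  using cat unfolding is_category_def hom_in_def by simp
lemma comp_id_l[simp]: "scod V f = A \<Longrightarrow> scomp V (sid V A) f = f"
  using cat unfolding is_category_def by blast
lemma comp_id_r[simp]: "sdom V f = A \<Longrightarrow> scomp V f (sid V A) = f"
  using cat unfolding is_category_def by blast
lemma comp_assoc[simp]: "scod V f = sdom V g \<Longrightarrow> scod V g = sdom V h \<Longrightarrow>
   scomp V (scomp V h g) f = scomp V h (scomp V g f)"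
  using cat unfolding is_category_def by simp

lemma dom_tarr[simp]: "sdom V (tarr V f g) = tobj V (sdom V f) (sdom V g)"
  using mon unfolding is_monoidal_def hom_in_def by simp
lemma cod_tarr[simp]: "scod V (tarr V f g) = tobj V (scod V f) (scod V g)"
  using mon unfolding is_monoidal_def hom_in_def by simp
lemma tarr_id[simp]: "tarr V (sid V A) (sid V B) = sid V (tobj V A B)"
  using mon unfolding is_monoidal_def by simp
lemma tarr_comp: "scod V f = sdom V g \<Longrightarrow> scod V f' = sdom V g' \<Longrightarrow>
   tarr V (scomp V g f) (scomp V g' f') = scomp V (tarr V g g') (tarr V f f')"
  using mon unfolding is_monoidal_def by simp

lemma dom_lunit[simp]: "sdom V (lunit V A) = tobj V (tunit V) A"
  using mon unfolding is_monoidal_def hom_in_def by simp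
lemma cod_lunit[simp]: "scod V (lunit V A) = A"
  using mon unfolding is_monoidal_def hom_in_def by simp
lemma iso_lunit: "is_iso V (lunit V A)"
  using mon unfolding is_monoidal_def by simp
lemma nat_lunit: "scomp V (lunit V (scod V f)) (tarr V (sid V (tunit V)) f) = scomp V f (lunit V (sdom V f))"
  using mon unfolding is_monoidal_def by simp
lemma dom_runit[simp]: "sdom V (runit V A) = tobj V A (tunit V)"
  using mon unfolding is_monoidal_def hom_in_def by simp
lemma cod_runit[simp]: "scod V (runit V A) = A"
  using mon unfolding is_monoidal_def hom_in_def by simp
lemma iso_runit: "is_iso V (runit V A)"
  using mon unfolding is_monoidal_def by simp

lemma dom_symm[simp]: "sdom V (symm V A B) = tobj V A B"
  using sym unfolding is_symmetric_def hom_in_def by simp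
lemma cod_symm[simp]: "scod V (symm V A B) = tobj V B A"
  using sym unfolding is_symmetric_def hom_in_def by simp
lemma nat_symm: "scomp V (symm V (scod V f) (scod V g)) (tarr V f g) = scomp V (tarr V g f) (symm V (sdom V f) (sdom V g))"
  using sym unfolding is_symmetric_def by simp
lemma symm_inv: "scomp V (symm V B A) (symm V A B) = sid V (tobj V A B)"
  using sym unfolding is_symmetric_def by simp

lemma dom_ev[simp]: "sdom V (ev V B C) = tobj V (ihom V B C) B"
  using clo unfolding is_closed_def hom_in_def by simp
lemma cod_ev[simp]: "scod V (ev V B C) = C"
  using clo unfolding is_closed_def hom_in_def by simp
lemma closed: "hom_in V f (tobj V A B) C \<Longrightarrow>
        (\<exists>!g. hom_in V g A (ihom V B C) \<and> scomp V (ev V B C) (tarr V g (sid V B)) = f)"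
  using clo unfolding is_closed_def by blast

lemma iso_cancel:
  assumes "is_iso V r" "sdom V f1 = scod V r" "sdom V f2 = scod V r"
    "scomp V f1 r = scomp V f2 r"
  shows "f1 = f2"
proof -
  obtain g where g: "hom_in V g (scod V r) (sdom V r)" "scomp V r g = sid V (scod V r)"
    using assms(1) unfolding is_iso_def by blast
  have "f1 = scomp V f1 (scomp V r g)" using g assms by simp
  also have "\<dots> = scomp V (scomp V f1 r) g" using g assms(2) unfolding hom_in_def by simp
  also have "\<dots> = scomp V (scomp V f2 r) g" using assms by simp
  also have "\<dots> = scomp V f2 (scomp V r g)" using g assms(3) unfolding hom_in_def by simp
  also have "\<dots> = f2" using g assms by simp
  finally show ?thesis .
qed

definition Phi :: "'o \<Rightarrow> 'o \<Rightarrow> 'm \<Rightarrow> 'm" where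
  "Phi A B g = scomp V (ev V A B) (tarr V g (sid V A))"

lemma dom_Phi[simp]: "scod V g = ihom V A B \<Longrightarrow> sdom V (Phi A B g) = tobj V (sdom V g) A"
  unfolding Phi_def by simp
lemma cod_Phi[simp]: "scod V g = ihom V A B \<Longrightarrow> scod V (Phi A B g) = B"
  unfolding Phi_def by simp

lemma Phi_inj: "scod V g1 = ihom V A B \<Longrightarrow> scod V g2 = ihom V A B \<Longrightarrow> sdom V g1 = sdom V g2 \<Longrightarrow>
   Phi A B g1 = Phi A B g2 \<Longrightarrow> g1 = g2"
  using closed[of "Phi A B g1" "sdom V g1" A B] unfolding hom_in_def Phi_def by simp metis

lemma Phi_surj: assumes "hom_in V f (tobj V X A) B"
  obtains g where "sdom V g = X" "scod V g = ihom V A B" "Phi A B g = f"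
  using closed[OF assms] unfolding hom_in_def Phi_def by blast

lemma Phi_pre: "scod V a = sdom V g \<Longrightarrow> scod V g = ihom V A B \<Longrightarrow>
   Phi A B (scomp V g a) = scomp V (Phi A B g) (tarr V a (sid V A))"
  unfolding Phi_def
  using tarr_comp[of a g "sid V A" "sid V A"] by simp


lemma curry:
  assumes "hom_in V f (tobj V A B) C"
  shows "sdom V (curry_arr V A B C f) = A \<and> scod V (curry_arr V A B C f) = ihom V B C
     \<and> Phi B C (curry_arr V A B C f) = f"
proof -
  have "hom_in V (curry_arr V A B C f) A (ihom V B C) \<and>
     scomp V (ev V B C) (tarr V (curry_arr V A B C f) (sid V B)) = f"
    unfolding curry_arr_def by (rule theI'[OF closed[OF assms]])
  then show ?thesis unfolding hom_in_def Phi_def by simp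
qed

lemma ihom_arr_props:
  "sdom V (ihom_arr V h k) = ihom V (scod V h) (sdom V k) \<and>
   scod V (ihom_arr V h k) = ihom V (sdom V h) (scod V k) \<and>
   Phi (sdom V h) (scod V k) (ihom_arr V h k) =
     scomp V k (scomp V (ev V (scod V h) (sdom V k)) (tarr V (sid V (ihom V (scod V h) (sdom V k))) h))"
  unfolding ihom_arr_def
  by (rule curry) (simp add: hom_in_def)

lemma dom_ihom_arr[simp]: "sdom V (ihom_arr V h k) = ihom V (scod V h) (sdom V k)"
  using ihom_arr_props by blast
lemma cod_ihom_arr[simp]: "scod V (ihom_arr V h k) = ihom V (sdom V h) (scod V k)"
  using ihom_arr_props by blast

lemma Phi_post:
  assumes g: "scod V g = ihom V (scod V h) (sdom V k)"
  shows "Phi (sdom V h) (scod V k) (scomp V (ihom_arr V h k) g) =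
     scomp V k (scomp V (Phi (scod V h) (sdom V k) g) (tarr V (sid V (sdom V g)) h))"
proof -
  have eq: "scomp V (tarr V (sid V (ihom V (scod V h) (sdom V k))) h) (tarr V g (sid V (sdom V h)))
     = scomp V (tarr V g (sid V (scod V h))) (tarr V (sid V (sdom V g)) h)"
  proof -
    have "scomp V (tarr V (sid V (ihom V (scod V h) (sdom V k))) h) (tarr V g (sid V (sdom V h)))
       = tarr V (scomp V (sid V (ihom V (scod V h) (sdom V k))) g) (scomp V h (sid V (sdom V h)))"
      using g by (simp add: tarr_comp[symmetric])
    also have "\<dots> = tarr V (scomp V g (sid V (sdom V g))) (scomp V (sid V (scod V h)) h)"
      using g by simp
    also have "\<dots> = scomp V (tarr V g (sid V (scod V h))) (tarr V (sid V (sdom V g)) h)"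
      using g by (simp add: tarr_comp[symmetric])
    finally show ?thesis .
  qed
  have "Phi (sdom V h) (scod V k) (scomp V (ihom_arr V h k) g) =
     scomp V (Phi (sdom V h) (scod V k) (ihom_arr V h k)) (tarr V g (sid V (sdom V h)))"
    using g by (simp add: Phi_pre)
  also have "\<dots> = scomp V k (scomp V (ev V (scod V h) (sdom V k))
      (scomp V (tarr V (sid V (ihom V (scod V h) (sdom V k))) h) (tarr V g (sid V (sdom V h)))))"
    using g ihom_arr_props by simp
  also have "\<dots> = scomp V k (scomp V (ev V (scod V h) (sdom V k))
      (scomp V (tarr V g (sid V (scod V h))) (tarr V (sid V (sdom V g)) h)))"
    by (simp only: eq)
  also have "\<dots> = scomp V k (scomp V (Phi (scod V h) (sdom V k) g) (tarr V (sid V (sdom V g)) h))"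
    using g unfolding Phi_def by simp
  finally show ?thesis .
qed


lemma Phi_post_id2:
  assumes "scod V g = ihom V A (sdom V m)"
  shows "Phi A (scod V m) (scomp V (ihom_arr V (sid V A) m) g) = scomp V m (Phi A (sdom V m) g)"
  using Phi_post[of g "sid V A" m] assms by simp

lemma Phi_post_id1:
  assumes "scod V g = ihom V (scod V e) B"
  shows "Phi (sdom V e) B (scomp V (ihom_arr V e (sid V B)) g) =
     scomp V (Phi (scod V e) B g) (tarr V (sid V (sdom V g)) e)"
  using Phi_post[of g e "sid V B"] assms by simp

lemma mono_ihom:
  assumes m: "is_mono V m"
  shows "is_mono V (ihom_arr V (sid V A) m)"
  unfolding is_mono_def
proof (intro allI impI)
  fix g1 g2
  assume a: "scod V g1 = sdom V (ihom_arr V (sid V A) m) \<and>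
         scod V g2 = sdom V (ihom_arr V (sid V A) m) \<and> sdom V g1 = sdom V g2 \<and>
         scomp V (ihom_arr V (sid V A) m) g1 = scomp V (ihom_arr V (sid V A) m) g2"
  then have t1: "scod V g1 = ihom V A (sdom V m)" and t2: "scod V g2 = ihom V A (sdom V m)" by simp_all
  have "scomp V m (Phi A (sdom V m) g1) = scomp V m (Phi A (sdom V m) g2)"
    using Phi_post_id2[OF t1, symmetric] Phi_post_id2[OF t2, symmetric] a by simp
  then have "Phi A (sdom V m) g1 = Phi A (sdom V m) g2"
    using m t1 t2 a unfolding is_mono_def by simp
  then show "g1 = g2" using t1 t2 a by (intro Phi_inj[OF t1 t2]) simp_all
qed

lemma ihom_mono:
  assumes M: "is_mono V (ihom_arr V (sid V (tunit V)) m)"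
  shows "is_mono V m"
  unfolding is_mono_def
proof (intro allI impI)
  fix f1 f2
  assume a: "scod V f1 = sdom V m \<and> scod V f2 = sdom V m \<and> sdom V f1 = sdom V f2 \<and>
         scomp V m f1 = scomp V m f2"
  define Y where "Y = sdom V f1"
  define I where "I = tunit V"
  have h1: "hom_in V (scomp V f1 (runit V Y)) (tobj V Y I) (sdom V m)"
    using a unfolding hom_in_def Y_def I_def by simp
  have h2: "hom_in V (scomp V f2 (runit V Y)) (tobj V Y I) (sdom V m)"
    using a unfolding hom_in_def Y_def I_def by simp
  obtain g1 where g1: "sdom V g1 = Y" "scod V g1 = ihom V I (sdom V m)"
     "Phi I (sdom V m) g1 = scomp V f1 (runit V Y)" using Phi_surj[OF h1] by blast
  obtain g2 where g2: "sdom V g2 = Y" "scod V g2 = ihom V I (sdom V m)"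
     "Phi I (sdom V m) g2 = scomp V f2 (runit V Y)" using Phi_surj[OF h2] by blast
  have a1: "scod V f1 = sdom V m" and a2: "scod V f2 = sdom V m" and a3: "scomp V m f1 = scomp V m f2"
    using a by simp_all
  have e: "scomp V m (scomp V f1 (runit V Y)) = scomp V m (scomp V f2 (runit V Y))"
  proof -
    have "scomp V m (scomp V f1 (runit V Y)) = scomp V (scomp V m f1) (runit V Y)"
      using a1 Y_def by simp
    also have "\<dots> = scomp V (scomp V m f2) (runit V Y)" by (simp only: a3)
    also have "\<dots> = scomp V m (scomp V f2 (runit V Y))"
      using a a2 Y_def by simp
    finally show ?thesis .
  qed
  have P: "Phi I (scod V m) (scomp V (ihom_arr V (sid V I) m) g1) =
        Phi I (scod V m) (scomp V (ihom_arr V (sid V I) m) g2)"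
  proof -
    have "Phi I (scod V m) (scomp V (ihom_arr V (sid V I) m) g1) = scomp V m (Phi I (sdom V m) g1)"
      by (rule Phi_post_id2[OF g1(2)])
    also have "\<dots> = scomp V m (scomp V f1 (runit V Y))" by (simp only: g1(3))
    also have "\<dots> = scomp V m (scomp V f2 (runit V Y))" by (rule e)
    also have "\<dots> = scomp V m (Phi I (sdom V m) g2)" by (simp only: g2(3))
    also have "\<dots> = Phi I (scod V m) (scomp V (ihom_arr V (sid V I) m) g2)"
      by (rule Phi_post_id2[OF g2(2), symmetric])
    finally show ?thesis .
  qed
  have "scomp V (ihom_arr V (sid V I) m) g1 = scomp V (ihom_arr V (sid V I) m) g2"
    apply (rule Phi_inj[where A=I and B="scod V m"]) using g1 g2 P by simp_all
  then have "g1 = g2" using M g1 g2 unfolding is_mono_def I_def by simp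
  then have E: "scomp V f1 (runit V Y) = scomp V f2 (runit V Y)" using g1 g2 by simp
  show "f1 = f2" apply (rule iso_cancel[OF iso_runit[of Y]]) using a E unfolding Y_def by simp_all
qed

lemma V_mono_iff: "V_mono V m \<longleftrightarrow> is_mono V m"
  unfolding V_mono_def using mono_ihom ihom_mono by blast


lemma iso_symm: "is_iso V (symm V A B)"
  unfolding is_iso_def hom_in_def using symm_inv[of A B] symm_inv[of B A]
  by (intro exI[of _ "symm V B A"]) simp

lemma tensor_epi:
  assumes ep: "is_epi V e"
  shows "is_epi V (tarr V (sid V X) e)"
  unfolding is_epi_def
proof (intro allI impI)
  fix g1 g2
  assume a: "sdom V g1 = scod V (tarr V (sid V X) e) \<and> sdom V g2 = scod V (tarr V (sid V X) e) \<and>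
    scod V g1 = scod V g2 \<and> scomp V g1 (tarr V (sid V X) e) = scomp V g2 (tarr V (sid V X) e)"
  define A1 where "A1 = sdom V e"
  define A2 where "A2 = scod V e"
  define B where "B = scod V g1"
  define s where "s = symm V A2 X"
  have d1: "sdom V g1 = tobj V X A2" and d2: "sdom V g2 = tobj V X A2" and c2: "scod V g2 = B"
    and E: "scomp V g1 (tarr V (sid V X) e) = scomp V g2 (tarr V (sid V X) e)"
    using a unfolding A2_def B_def by simp_all
  have ns: "scomp V s (tarr V e (sid V X)) = scomp V (tarr V (sid V X) e) (symm V A1 X)"
    using nat_symm[of e "sid V X"] unfolding s_def A1_def A2_def by simp
  have key: "Phi X B (scomp V c e) = scomp V (scomp V g (tarr V (sid V X) e)) (symm V A1 X)"
    if c: "sdom V c = A2" "scod V c = ihom V X B" "Phi X B c = scomp V g s"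
      and g: "sdom V g = tobj V X A2" for c g
  proof -
    have "Phi X B (scomp V c e) = scomp V (Phi X B c) (tarr V e (sid V X))"
      using c by (intro Phi_pre) (simp_all add: A2_def)
    also have "\<dots> = scomp V (scomp V g s) (tarr V e (sid V X))" by (simp only: c(3))
    also have "\<dots> = scomp V g (scomp V s (tarr V e (sid V X)))"
      using g unfolding s_def A2_def by simp
    also have "\<dots> = scomp V g (scomp V (tarr V (sid V X) e) (symm V A1 X))" by (simp only: ns)
    also have "\<dots> = scomp V (scomp V g (tarr V (sid V X) e)) (symm V A1 X)"
      using g unfolding A1_def A2_def by simp
    finally show ?thesis .
  qed
  have h1: "hom_in V (scomp V g1 s) (tobj V A2 X) B"
    using d1 unfolding hom_in_def s_def B_def by simp
  have h2: "hom_in V (scomp V g2 s) (tobj V A2 X) B"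
    using d2 c2 unfolding hom_in_def s_def by simp
  obtain c1 where c1: "sdom V c1 = A2" "scod V c1 = ihom V X B" "Phi X B c1 = scomp V g1 s"
    using Phi_surj[OF h1] by blast
  obtain c2 where cc2: "sdom V c2 = A2" "scod V c2 = ihom V X B" "Phi X B c2 = scomp V g2 s"
    using Phi_surj[OF h2] by blast
  have P: "Phi X B (scomp V c1 e) = Phi X B (scomp V c2 e)"
    using key[OF c1 d1] key[OF cc2 d2] E by simp
  have "scomp V c1 e = scomp V c2 e"
    apply (rule Phi_inj[where A=X and B=B]) using c1 cc2 P unfolding A2_def by simp_all
  then have "c1 = c2" using ep c1 cc2 unfolding is_epi_def A2_def by simp
  then have E2: "scomp V g1 s = scomp V g2 s" using c1 cc2 by simp
  show "g1 = g2" apply (rule iso_cancel[OF iso_symm[of A2 X]]) using d1 d2 E2 unfolding s_def by simp_all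
qed

lemma epi_V_epi: "is_epi V e \<Longrightarrow> V_epi V e"
  unfolding V_epi_def is_mono_def
proof (intro allI impI)
  fix B g1 g2
  assume ep: "is_epi V e"
  assume a: "scod V g1 = sdom V (ihom_arr V e (sid V B)) \<and>
         scod V g2 = sdom V (ihom_arr V e (sid V B)) \<and> sdom V g1 = sdom V g2 \<and>
         scomp V (ihom_arr V e (sid V B)) g1 = scomp V (ihom_arr V e (sid V B)) g2"
  then have t1: "scod V g1 = ihom V (scod V e) B" and t2: "scod V g2 = ihom V (scod V e) B"
    and dd: "sdom V g1 = sdom V g2"
    and E: "scomp V (ihom_arr V e (sid V B)) g1 = scomp V (ihom_arr V e (sid V B)) g2" by simp_all
  have "scomp V (Phi (scod V e) B g1) (tarr V (sid V (sdom V g1)) e)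
      = scomp V (Phi (scod V e) B g2) (tarr V (sid V (sdom V g1)) e)"
    using Phi_post_id1[OF t1] Phi_post_id1[OF t2] E dd by simp
  then have "Phi (scod V e) B g1 = Phi (scod V e) B g2"
    using tensor_epi[OF ep, of "sdom V g1"] t1 t2 dd unfolding is_epi_def by simp
  then show "g1 = g2" apply (rule Phi_inj[rotated 3]) using t1 t2 dd by simp_all
qed

lemma V_epi_epi:
  assumes VE: "V_epi V e"
  shows "is_epi V e"
  unfolding is_epi_def
proof (intro allI impI)
  fix g1 g2
  assume a: "sdom V g1 = scod V e \<and> sdom V g2 = scod V e \<and> scod V g1 = scod V g2 \<and>
    scomp V g1 e = scomp V g2 e"
  define A1 where "A1 = sdom V e"
  define A2 where "A2 = scod V e"
  define B where "B = scod V g1"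
  define I where "I = tunit V"
  have d1: "sdom V g1 = A2" and d2: "sdom V g2 = A2" and c2: "scod V g2 = B"
    and E: "scomp V g1 e = scomp V g2 e"
    using a unfolding A2_def B_def by simp_all
  have nl: "scomp V (lunit V A2) (tarr V (sid V I) e) = scomp V e (lunit V A1)"
    using nat_lunit[of e] unfolding A1_def A2_def I_def by simp
  have key: "Phi A1 B (scomp V (ihom_arr V e (sid V B)) c) = scomp V (scomp V g e) (lunit V A1)"
    if c: "sdom V c = I" "scod V c = ihom V A2 B" "Phi A2 B c = scomp V g (lunit V A2)"
      and g: "sdom V g = A2" for c g
  proof -
    have "Phi A1 B (scomp V (ihom_arr V e (sid V B)) c) = scomp V (Phi A2 B c) (tarr V (sid V I) e)"
      using Phi_post_id1[of c e B] c unfolding A1_def A2_def by simp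
    also have "\<dots> = scomp V (scomp V g (lunit V A2)) (tarr V (sid V I) e)" by (simp only: c(3))
    also have "\<dots> = scomp V g (scomp V (lunit V A2) (tarr V (sid V I) e))"
      using g unfolding A2_def I_def by simp
    also have "\<dots> = scomp V g (scomp V e (lunit V A1))" by (simp only: nl)
    also have "\<dots> = scomp V (scomp V g e) (lunit V A1)"
      using g unfolding A1_def A2_def by simp
    finally show ?thesis .
  qed
  have h1: "hom_in V (scomp V g1 (lunit V A2)) (tobj V I A2) B"
    using d1 unfolding hom_in_def I_def B_def by simp
  have h2: "hom_in V (scomp V g2 (lunit V A2)) (tobj V I A2) B"
    using d2 c2 unfolding hom_in_def I_def by simp
  obtain c1 where c1: "sdom V c1 = I" "scod V c1 = ihom V A2 B" "Phi A2 B c1 = scomp V g1 (lunit V A2)"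
    using Phi_surj[OF h1] by blast
  obtain c2 where cc2: "sdom V c2 = I" "scod V c2 = ihom V A2 B" "Phi A2 B c2 = scomp V g2 (lunit V A2)"
    using Phi_surj[OF h2] by blast
  have P: "Phi A1 B (scomp V (ihom_arr V e (sid V B)) c1) = Phi A1 B (scomp V (ihom_arr V e (sid V B)) c2)"
    using key[OF c1 d1] key[OF cc2 d2] E by simp
  have "scomp V (ihom_arr V e (sid V B)) c1 = scomp V (ihom_arr V e (sid V B)) c2"
    apply (rule Phi_inj[where A=A1 and B=B]) using c1 cc2 P unfolding A1_def A2_def by simp_all
  then have "c1 = c2" using VE c1 cc2 unfolding V_epi_def is_mono_def A2_def by simp
  then have E2: "scomp V g1 (lunit V A2) = scomp V g2 (lunit V A2)" using c1 cc2 by simp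
  show "g1 = g2" apply (rule iso_cancel[OF iso_lunit[of A2]]) using d1 d2 E2 by simp_all
qed

lemma V_epi_iff: "V_epi V e \<longleftrightarrow> is_epi V e"
  using V_epi_epi epi_V_epi by blast


lemma Phi_p1: "scod V w = ihom V A (sdom V m) \<Longrightarrow>
   Phi A (scod V m) (scomp V (ihom_arr V (sid V A) m) w) = scomp V m (Phi A (sdom V m) w)"
  by (rule Phi_post_id2)

lemma sq:
  assumes w: "scod V w = ihom V (scod V e) (sdom V m)"
  shows "scomp V (ihom_arr V e (sid V (scod V m))) (scomp V (ihom_arr V (sid V (scod V e)) m) w)
       = scomp V (ihom_arr V (sid V (sdom V e)) m) (scomp V (ihom_arr V e (sid V (sdom V m))) w)"
proof -
  have t1: "scod V (scomp V (ihom_arr V (sid V (scod V e)) m) w) = ihom V (scod V e) (scod V m)"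
    using w by simp
  have t2: "scod V (scomp V (ihom_arr V e (sid V (sdom V m))) w) = ihom V (sdom V e) (sdom V m)"
    using w by simp
  have L: "Phi (sdom V e) (scod V m) (scomp V (ihom_arr V e (sid V (scod V m))) (scomp V (ihom_arr V (sid V (scod V e)) m) w))
     = scomp V (scomp V m (Phi (scod V e) (sdom V m) w)) (tarr V (sid V (sdom V w)) e)"
    using Phi_post_id1[OF t1] Phi_post_id2[OF w] w by simp
  have R: "Phi (sdom V e) (scod V m) (scomp V (ihom_arr V (sid V (sdom V e)) m) (scomp V (ihom_arr V e (sid V (sdom V m))) w))
     = scomp V m (scomp V (Phi (scod V e) (sdom V m) w) (tarr V (sid V (sdom V w)) e))"
    using Phi_post_id2[OF t2] Phi_post_id1[OF w] w by simp
  show ?thesis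
    apply (rule Phi_inj[where A="sdom V e" and B="scod V m"])
    using L R w by simp_all
qed

lemma V_orth_imp:
  assumes PB: "V_orth V e m"
  shows "orth V (tarr V (sid V X) e) m"
  unfolding orth_def
proof (intro allI impI)
  fix u v
  assume a: "hom_in V u (sdom V (tarr V (sid V X) e)) (sdom V m) \<and>
      hom_in V v (scod V (tarr V (sid V X) e)) (scod V m) \<and>
      scomp V m u = scomp V v (tarr V (sid V X) e)"
  have hu: "hom_in V u (tobj V X (sdom V e)) (sdom V m)" and hv: "hom_in V v (tobj V X (scod V e)) (scod V m)"
    and cm: "scomp V m u = scomp V v (tarr V (sid V X) e)" using a by simp_all
  obtain q2 where q2: "sdom V q2 = X" "scod V q2 = ihom V (sdom V e) (sdom V m)" "Phi (sdom V e) (sdom V m) q2 = u"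
    using Phi_surj[OF hu] by blast
  obtain q1 where q1: "sdom V q1 = X" "scod V q1 = ihom V (scod V e) (scod V m)" "Phi (scod V e) (scod V m) q1 = v"
    using Phi_surj[OF hv] by blast
  have P1: "Phi (sdom V e) (scod V m) (scomp V (ihom_arr V e (sid V (scod V m))) q1) = scomp V v (tarr V (sid V X) e)"
    using Phi_post_id1[OF q1(2)] q1 by simp
  have P2: "Phi (sdom V e) (scod V m) (scomp V (ihom_arr V (sid V (sdom V e)) m) q2) = scomp V m u"
    using Phi_post_id2[OF q2(2)] q2 by simp
  have comm: "scomp V (ihom_arr V e (sid V (scod V m))) q1 = scomp V (ihom_arr V (sid V (sdom V e)) m) q2"
    apply (rule Phi_inj[where A="sdom V e" and B="scod V m"])
    using P1 P2 cm q1 q2 by simp_all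
  have U: "\<exists>!w. hom_in V w (sdom V q1) (ihom V (scod V e) (sdom V m)) \<and>
        scomp V (ihom_arr V (sid V (scod V e)) m) w = q1 \<and> scomp V (ihom_arr V e (sid V (sdom V m))) w = q2"
  proof -
    have PBU: "\<forall>q1 q2.
          sdom V q1 = sdom V q2 \<and>
          scod V q1 = ihom V (scod V e) (scod V m) \<and>
          scod V q2 = ihom V (sdom V e) (sdom V m) \<and>
          scomp V (ihom_arr V e (sid V (scod V m))) q1 =
          scomp V (ihom_arr V (sid V (sdom V e)) m) q2 \<longrightarrow>
          (\<exists>!u. hom_in V u (sdom V q1) (ihom V (scod V e) (sdom V m)) \<and>
                scomp V (ihom_arr V (sid V (scod V e)) m) u = q1 \<and>
                scomp V (ihom_arr V e (sid V (sdom V m))) u = q2)"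
      using PB unfolding V_orth_def is_pullback_def by simp
    show ?thesis using PBU[rule_format, of q1 q2] comm q1 q2 by simp
  qed
  then obtain w where w: "hom_in V w X (ihom V (scod V e) (sdom V m))"
    "scomp V (ihom_arr V (sid V (scod V e)) m) w = q1" "scomp V (ihom_arr V e (sid V (sdom V m))) w = q2"
    using q1 by auto
  have wt: "scod V w = ihom V (scod V e) (sdom V m)" "sdom V w = X" using w(1) unfolding hom_in_def by simp_all
  show "\<exists>!d. hom_in V d (scod V (tarr V (sid V X) e)) (sdom V m) \<and>
             scomp V d (tarr V (sid V X) e) = u \<and> scomp V m d = v"
  proof (rule ex1I[of _ "Phi (scod V e) (sdom V m) w"])
    have A1: "scomp V (Phi (scod V e) (sdom V m) w) (tarr V (sid V X) e) = u"
      using Phi_post_id1[OF wt(1)] w(3) q2(3) wt by simp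
    have A2: "scomp V m (Phi (scod V e) (sdom V m) w) = v"
      using Phi_post_id2[OF wt(1)] w(2) q1(3) wt by simp
    show "hom_in V (Phi (scod V e) (sdom V m) w) (scod V (tarr V (sid V X) e)) (sdom V m) \<and>
      scomp V (Phi (scod V e) (sdom V m) w) (tarr V (sid V X) e) = u \<and>
      scomp V m (Phi (scod V e) (sdom V m) w) = v"
      using A1 A2 wt unfolding hom_in_def by simp
  next
    fix d
    assume d: "hom_in V d (scod V (tarr V (sid V X) e)) (sdom V m) \<and>
        scomp V d (tarr V (sid V X) e) = u \<and> scomp V m d = v"
    have hd: "hom_in V d (tobj V X (scod V e)) (sdom V m)" using d by simp
    obtain w' where w': "sdom V w' = X" "scod V w' = ihom V (scod V e) (sdom V m)"
       "Phi (scod V e) (sdom V m) w' = d"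
      using Phi_surj[OF hd] by blast
    have B1: "scomp V (ihom_arr V (sid V (scod V e)) m) w' = q1"
      apply (rule Phi_inj[where A="scod V e" and B="scod V m"])
      using Phi_post_id2[OF w'(2)] w' d q1 by simp_all
    have B2: "scomp V (ihom_arr V e (sid V (sdom V m))) w' = q2"
      apply (rule Phi_inj[where A="sdom V e" and B="sdom V m"])
      using Phi_post_id1[OF w'(2)] w' d q2 by simp_all
    have "w' = w" using U w' B1 B2 w q1 unfolding hom_in_def by blast
    then show "d = Phi (scod V e) (sdom V m) w" using w' by simp
  qed
qed


lemma ex1_uniq: "\<exists>!x. P x \<Longrightarrow> P a \<Longrightarrow> P b \<Longrightarrow> a = b" by blast

lemma imp_V_orth:
  assumes O: "\<And>X. orth V (tarr V (sid V X) e) m"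
  shows "V_orth V e m"
proof -
  have comm: "scomp V (ihom_arr V e (sid V (scod V m))) (ihom_arr V (sid V (scod V e)) m)
     = scomp V (ihom_arr V (sid V (sdom V e)) m) (ihom_arr V e (sid V (sdom V m)))"
    using sq[of "sid V (ihom V (scod V e) (sdom V m))" e m] by simp
  have univ: "\<exists>!w. hom_in V w (sdom V q1) (ihom V (scod V e) (sdom V m)) \<and>
          scomp V (ihom_arr V (sid V (scod V e)) m) w = q1 \<and>
          scomp V (ihom_arr V e (sid V (sdom V m))) w = q2"
    if q: "sdom V q1 = sdom V q2" "scod V q1 = ihom V (scod V e) (scod V m)"
          "scod V q2 = ihom V (sdom V e) (sdom V m)"
          "scomp V (ihom_arr V e (sid V (scod V m))) q1 = scomp V (ihom_arr V (sid V (sdom V e)) m) q2"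
    for q1 q2
  proof -
    define X where "X = sdom V q1"
    define u where "u = Phi (sdom V e) (sdom V m) q2"
    define v where "v = Phi (scod V e) (scod V m) q1"
    have P1: "Phi (sdom V e) (scod V m) (scomp V (ihom_arr V e (sid V (scod V m))) q1) = scomp V v (tarr V (sid V X) e)"
      using Phi_post_id1[OF q(2)] unfolding v_def X_def by simp
    have P2: "Phi (sdom V e) (scod V m) (scomp V (ihom_arr V (sid V (sdom V e)) m) q2) = scomp V m u"
      using Phi_post_id2[OF q(3)] unfolding u_def by simp
    have cm: "scomp V m u = scomp V v (tarr V (sid V X) e)" using P1 P2 q(4) by simp
    have hu: "hom_in V u (sdom V (tarr V (sid V X) e)) (sdom V m)"
      using q unfolding u_def X_def hom_in_def by simp
    have hv: "hom_in V v (scod V (tarr V (sid V X) e)) (scod V m)"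
      using q unfolding v_def X_def hom_in_def by simp
    have D: "\<exists>!d. hom_in V d (scod V (tarr V (sid V X) e)) (sdom V m) \<and>
             scomp V d (tarr V (sid V X) e) = u \<and> scomp V m d = v"
      using O[of X, unfolded orth_def, rule_format, of u v] hu hv cm by simp
    then obtain d where d: "hom_in V d (scod V (tarr V (sid V X) e)) (sdom V m)"
      "scomp V d (tarr V (sid V X) e) = u" "scomp V m d = v" by blast
    have hd: "hom_in V d (tobj V X (scod V e)) (sdom V m)" using d by simp
    obtain w where w: "sdom V w = X" "scod V w = ihom V (scod V e) (sdom V m)"
       "Phi (scod V e) (sdom V m) w = d"
      using Phi_surj[OF hd] by blast
    have key: "scomp V (ihom_arr V (sid V (scod V e)) m) w' = q1 \<and>
          scomp V (ihom_arr V e (sid V (sdom V m))) w' = q2"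
      if w': "sdom V w' = X" "scod V w' = ihom V (scod V e) (sdom V m)"
        "scomp V (Phi (scod V e) (sdom V m) w') (tarr V (sid V X) e) = u"
        "scomp V m (Phi (scod V e) (sdom V m) w') = v" for w'
    proof
      show "scomp V (ihom_arr V (sid V (scod V e)) m) w' = q1"
        apply (rule Phi_inj[where A="scod V e" and B="scod V m"])
        using Phi_post_id2[OF w'(2)] w' q unfolding v_def X_def by simp_all
      show "scomp V (ihom_arr V e (sid V (sdom V m))) w' = q2"
        apply (rule Phi_inj[where A="sdom V e" and B="sdom V m"])
        using Phi_post_id1[OF w'(2)] w' q unfolding u_def X_def by simp_all
    qed
    show ?thesis
    proof (rule ex1I[of _ w])
      show "hom_in V w (sdom V q1) (ihom V (scod V e) (sdom V m)) \<and>
          scomp V (ihom_arr V (sid V (scod V e)) m) w = q1 \<and>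
          scomp V (ihom_arr V e (sid V (sdom V m))) w = q2"
        using key[OF w(1,2)] w d unfolding hom_in_def X_def by simp
    next
      fix w'
      assume a: "hom_in V w' (sdom V q1) (ihom V (scod V e) (sdom V m)) \<and>
          scomp V (ihom_arr V (sid V (scod V e)) m) w' = q1 \<and>
          scomp V (ihom_arr V e (sid V (sdom V m))) w' = q2"
      have t: "sdom V w' = X" "scod V w' = ihom V (scod V e) (sdom V m)"
        using a unfolding hom_in_def X_def by simp_all
      have e1: "scomp V (Phi (scod V e) (sdom V m) w') (tarr V (sid V X) e) = u"
        using Phi_post_id1[OF t(2)] a t unfolding u_def by simp
      have e2: "scomp V m (Phi (scod V e) (sdom V m) w') = v"
        using Phi_post_id2[OF t(2)] a t unfolding v_def by simp
      have "Phi (scod V e) (sdom V m) w' = d"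
        using ex1_uniq[OF D, of "Phi (scod V e) (sdom V m) w'" d] e1 e2 d t unfolding hom_in_def by simp
      then show "w' = w"
        apply (intro Phi_inj[where A="scod V e" and B="sdom V m", OF t(2) w(2)])
        using t w by simp_all
    qed
  qed
  show ?thesis
    unfolding V_orth_def is_pullback_def
    using comm univ by simp
qed

lemma orth_unit:
  assumes O: "orth V (tarr V (sid V (tunit V)) e) m"
  shows "orth V e m"
  unfolding orth_def
proof (intro allI impI)
  fix u v
  assume a: "hom_in V u (sdom V e) (sdom V m) \<and> hom_in V v (scod V e) (scod V m) \<and>
     scomp V m u = scomp V v e"
  define E where "E = tarr V (sid V (tunit V)) e"
  define L1 where "L1 = lunit V (sdom V e)"
  define L2 where "L2 = lunit V (scod V e)"
  have nl: "scomp V L2 E = scomp V e L1"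
    using nat_lunit[of e] unfolding L1_def L2_def E_def by simp
  have hu: "sdom V u = sdom V e" "scod V u = sdom V m" and hv: "sdom V v = scod V e" "scod V v = scod V m"
    and cm: "scomp V m u = scomp V v e" using a unfolding hom_in_def by simp_all
  have cm': "scomp V m (scomp V u L1) = scomp V (scomp V v L2) E"
  proof -
    have "scomp V m (scomp V u L1) = scomp V (scomp V m u) L1" using hu unfolding L1_def by simp
    also have "\<dots> = scomp V (scomp V v e) L1" by (simp only: cm)
    also have "\<dots> = scomp V v (scomp V e L1)" using hv unfolding L1_def by simp
    also have "\<dots> = scomp V v (scomp V L2 E)" by (simp only: nl)
    also have "\<dots> = scomp V (scomp V v L2) E" using hv unfolding L2_def E_def by simp
    finally show ?thesis .
  qed
  have D: "\<exists>!d. hom_in V d (scod V E) (sdom V m) \<and> scomp V d E = scomp V u L1 \<and>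
      scomp V m d = scomp V v L2"
    using O cm' hu hv unfolding orth_def E_def L1_def L2_def hom_in_def by simp
  then obtain d' where d': "hom_in V d' (scod V E) (sdom V m)" "scomp V d' E = scomp V u L1"
      "scomp V m d' = scomp V v L2" by blast
  obtain L2' where L2': "hom_in V L2' (scod V L2) (sdom V L2)" "scomp V L2' L2 = sid V (sdom V L2)"
       "scomp V L2 L2' = sid V (scod V L2)"
    using iso_lunit[of "scod V e"] unfolding is_iso_def L2_def by blast
  obtain L1' where L1': "hom_in V L1' (scod V L1) (sdom V L1)" "scomp V L1' L1 = sid V (sdom V L1)"
       "scomp V L1 L1' = sid V (scod V L1)"
    using iso_lunit[of "sdom V e"] unfolding is_iso_def L1_def by blast
  have td': "sdom V d' = tobj V (tunit V) (scod V e)" "scod V d' = sdom V m"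
    using d'(1) unfolding hom_in_def E_def by simp_all
  have tL2': "sdom V L2' = scod V e" "scod V L2' = tobj V (tunit V) (scod V e)"
    using L2'(1) unfolding hom_in_def L2_def by simp_all
  have tL1': "sdom V L1' = sdom V e" "scod V L1' = tobj V (tunit V) (sdom V e)"
    using L1'(1) unfolding hom_in_def L1_def by simp_all
  have EX: "hom_in V (scomp V d' L2') (scod V e) (sdom V m) \<and> scomp V (scomp V d' L2') e = u \<and>
        scomp V m (scomp V d' L2') = v"
  proof -
    have "scomp V (scomp V d' L2') e = scomp V d' (scomp V L2' (scomp V e (scomp V L1 L1')))"
      using tL2' tL1' td' L1'(3) unfolding L1_def by simp
    also have "\<dots> = scomp V d' (scomp V L2' (scomp V (scomp V e L1) L1'))"
      using tL1' unfolding L1_def by simp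
    also have "\<dots> = scomp V d' (scomp V L2' (scomp V (scomp V L2 E) L1'))" by (simp only: nl)
    also have "\<dots> = scomp V (scomp V d' (scomp V (scomp V L2' L2) E)) L1'"
      using tL2' tL1' td' unfolding L1_def L2_def E_def by simp
    also have "\<dots> = scomp V (scomp V d' E) L1'"
      using L2'(2) td' unfolding L2_def E_def by simp
    also have "\<dots> = scomp V (scomp V u L1) L1'" by (simp only: d'(2))
    also have "\<dots> = u" using L1'(3) hu tL1' unfolding L1_def by simp
    finally have X1: "scomp V (scomp V d' L2') e = u" .
    have "scomp V m (scomp V d' L2') = scomp V (scomp V m d') L2'" using td' tL2' by simp
    also have "\<dots> = scomp V (scomp V v L2) L2'" by (simp only: d'(3))
    also have "\<dots> = v" using L2'(3) hv tL2' unfolding L2_def by simp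
    finally have X2: "scomp V m (scomp V d' L2') = v" .
    show ?thesis
      using X1 X2 td' tL2' unfolding hom_in_def by simp
  qed
  show "\<exists>!d. hom_in V d (scod V e) (sdom V m) \<and> scomp V d e = u \<and> scomp V m d = v"
  proof (rule ex1I[of _ "scomp V d' L2'"])
    show "hom_in V (scomp V d' L2') (scod V e) (sdom V m) \<and> scomp V (scomp V d' L2') e = u \<and>
        scomp V m (scomp V d' L2') = v" by (rule EX)
  next
    have U: "d1 = d2" if d1: "hom_in V d1 (scod V e) (sdom V m)" "scomp V d1 e = u" "scomp V m d1 = v"
      and d2: "hom_in V d2 (scod V e) (sdom V m)" "scomp V d2 e = u" "scomp V m d2 = v" for d1 d2
    proof -
      have P: "hom_in V (scomp V d L2) (scod V E) (sdom V m) \<and> scomp V (scomp V d L2) E = scomp V u L1 \<and>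
          scomp V m (scomp V d L2) = scomp V v L2"
        if dd: "hom_in V d (scod V e) (sdom V m)" "scomp V d e = u" "scomp V m d = v" for d
      proof -
        have t: "sdom V d = scod V e" "scod V d = sdom V m" using dd(1) unfolding hom_in_def by simp_all
        have "scomp V (scomp V d L2) E = scomp V d (scomp V L2 E)"
          using t unfolding L2_def E_def by simp
        also have "\<dots> = scomp V d (scomp V e L1)" by (simp only: nl)
        also have "\<dots> = scomp V (scomp V d e) L1" using t unfolding L1_def by simp
        also have "\<dots> = scomp V u L1" by (simp only: dd(2))
        finally have "scomp V (scomp V d L2) E = scomp V u L1" .
        moreover have "scomp V m (scomp V d L2) = scomp V v L2"
          using t dd(3) unfolding L2_def by (simp del: comp_assoc add: comp_assoc[symmetric])
        ultimately show ?thesis using t unfolding hom_in_def E_def L2_def by simp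
      qed
      have EE: "scomp V d1 L2 = scomp V d2 L2" using ex1_uniq[OF D P[OF d1] P[OF d2]] .
      show ?thesis
        apply (rule iso_cancel[OF iso_lunit[of "scod V e"]])
        using d1 d2 EE unfolding hom_in_def L2_def by simp_all
    qed
    fix d
    assume "hom_in V d (scod V e) (sdom V m) \<and> scomp V d e = u \<and> scomp V m d = v"
    moreover note EX
    ultimately show "d = scomp V d' L2'" using U by simp
  qed
qed

end

theorem proposition7p7:
  fixes V :: "('o, 'm) smc_data"
  assumes "symmetric_monoidal_closed V"
  shows "StrMono_V V = StrMono V"
proof -
  interpret smc V using assms by unfold_locales
  show ?thesis
  proof (intro set_eqI iffI)
    fix m assume "m \<in> StrMono_V V"
    then have a: "V_mono V m" "\<And>e. V_epi V e \<Longrightarrow> V_orth V e m" unfolding StrMono_V_def by auto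
    have "is_mono V m" using a(1) V_mono_iff by simp
    moreover have "orth V e m" if "is_epi V e" for e
      using orth_unit[OF V_orth_imp[OF a(2)[OF epi_V_epi[OF that]]]] .
    ultimately show "m \<in> StrMono V" unfolding StrMono_def by auto
  next
    fix m assume "m \<in> StrMono V"
    then have a: "is_mono V m" "\<And>e. is_epi V e \<Longrightarrow> orth V e m" unfolding StrMono_def by auto
    have "V_mono V m" using a(1) V_mono_iff by simp
    moreover have "V_orth V e m" if "V_epi V e" for e
      using imp_V_orth[OF a(2)[OF tensor_epi[OF V_epi_epi[OF that]]]] .
    ultimately show "m \<in> StrMono_V V" unfolding StrMono_V_def by auto
  qed
qed


end
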